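(* Let $x,y,z$ be nodes of a finite, connected, unweighted, undirected graph, and suppose some node $c$ is a Condorcet winner for $\{x,y,z\}$. Then $c$ lies on a shortest path between $x$ and $y$, on a shortest path between $x$ and $z$, and on a shortest path between $y$ and $z$.
   Context: $d$ is the shortest-path distance. A node $c$ is a Condorcet winner for a set $S$ if for every other node $y'$, $\lvert\{u\in S: d(u,c)<d(u,y')\}\rvert > \lvert\{u\in S: d(u,y')<d(u,c)\}\rvert$. *)

theory Defs
  imports Main
begin

definition graph :: "'a set \<Rightarrow> ('a \<Rightarrow> 'a \<Rightarrow> bool) \<Rightarrow> bool" where
  "graph V E \<longleftrightarrow> finite V \<and> (\<forall>u v. E u v \<longrightarrow> u \<in> V \<and> v \<in> V)
     \<and> (\<forall>u v. E u v \<longrightarrow> E v u) \<and> (\<forall>u. \<not> E u u)"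

text \<open>A walk from u to v given as the list of its vertices; its length is length p - 1.\<close>
definition is_path :: "'a set \<Rightarrow> ('a \<Rightarrow> 'a \<Rightarrow> bool) \<Rightarrow> 'a list \<Rightarrow> 'a \<Rightarrow> 'a \<Rightarrow> bool" where
  "is_path V E p u v \<longleftrightarrow> p \<noteq> [] \<and> hd p = u \<and> last p = v \<and> set p \<subseteq> V
     \<and> (\<forall>i. Suc i < length p \<longrightarrow> E (p ! i) (p ! Suc i))"

definition connected_graph :: "'a set \<Rightarrow> ('a \<Rightarrow> 'a \<Rightarrow> bool) \<Rightarrow> bool" where
  "connected_graph V E \<longleftrightarrow> (\<forall>u\<in>V. \<forall>v\<in>V. \<exists>p. is_path V E p u v)"

definition gdist :: "'a set \<Rightarrow> ('a \<Rightarrow> 'a \<Rightarrow> bool) \<Rightarrow> 'a \<Rightarrow> 'a \<Rightarrow> nat" where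
  "gdist V E u v = (LEAST n. \<exists>p. is_path V E p u v \<and> length p = Suc n)"

definition shortest_path :: "'a set \<Rightarrow> ('a \<Rightarrow> 'a \<Rightarrow> bool) \<Rightarrow> 'a list \<Rightarrow> 'a \<Rightarrow> 'a \<Rightarrow> bool" where
  "shortest_path V E p u v \<longleftrightarrow> is_path V E p u v \<and> length p = Suc (gdist V E u v)"

definition condorcet_winner :: "'a set \<Rightarrow> ('a \<Rightarrow> 'a \<Rightarrow> bool) \<Rightarrow> 'a set \<Rightarrow> 'a \<Rightarrow> bool" where
  "condorcet_winner V E S c \<longleftrightarrow> c \<in> V \<and>
     (\<forall>y'\<in>V. y' \<noteq> c \<longrightarrow>
        card {u\<in>S. gdist V E u c < gdist V E u y'} > card {u\<in>S. gdist V E u y' < gdist V E u c})"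

end

theory Submission
  imports Defs
begin

context
  fixes V :: "'a set" and E :: "'a \<Rightarrow> 'a \<Rightarrow> bool"
  assumes G: "graph V E" and C: "connected_graph V E"
begin

private abbreviation "d \<equiv> gdist V E"

lemma gd_path: "u \<in> V \<Longrightarrow> v \<in> V \<Longrightarrow> \<exists>p. is_path V E p u v \<and> length p = Suc (d u v)"
proof -
  assume "u \<in> V" "v \<in> V"
  then obtain p where p: "is_path V E p u v" using C unfolding connected_graph_def by auto
  have "p \<noteq> []" using p by (simp add: is_path_def)
  then have "length p = Suc (length p - 1)" by simp
  then have "\<exists>n p. is_path V E p u v \<and> length p = Suc n" using p by blast
  then have "\<exists>p. is_path V E p u v \<and> length p = Suc (LEAST n. \<exists>p. is_path V E p u v \<and> length p = Suc n)"
    by (rule LeastI_ex[where P = "\<lambda>n. \<exists>p. is_path V E p u v \<and> length p = Suc n"])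
  then show ?thesis unfolding gdist_def .
qed

lemma gd_le: assumes "is_path V E p u v" shows "d u v \<le> length p - 1"
proof -
  have "p \<noteq> []" using assms by (simp add: is_path_def)
  then have "length p = Suc (length p - 1)" by simp
  then show ?thesis unfolding gdist_def using assms by (intro Least_le) blast
qed

lemma path_V: "is_path V E p u v \<Longrightarrow> u \<in> V \<and> v \<in> V"
  unfolding is_path_def by (metis hd_in_set last_in_set subsetD)

lemma path_rev: "is_path V E p u v \<Longrightarrow> is_path V E (rev p) v u"
proof -
  assume a: "is_path V E p u v"
  have sym: "\<And>a b. E a b \<Longrightarrow> E b a" using G unfolding graph_def by blast
  show ?thesis unfolding is_path_def
  proof (intro conjI allI impI)
    fix i assume i: "Suc i < length (rev p)"
    have "E (p ! (length p - Suc (Suc i))) (p ! Suc (length p - Suc (Suc i)))"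
      using a i unfolding is_path_def by auto
    moreover have "Suc (length p - Suc (Suc i)) = length p - Suc i" using i by auto
    ultimately show "E (rev p ! i) (rev p ! Suc i)" using i sym by (auto simp: rev_nth)
  qed (use a in \<open>auto simp: is_path_def hd_rev last_rev\<close>)
qed

lemma path_app: "is_path V E p u v \<Longrightarrow> is_path V E q v w \<Longrightarrow> is_path V E (p @ tl q) u w"
proof -
  assume a: "is_path V E p u v" and b: "is_path V E q v w"
  have q: "q = v # tl q" using b unfolding is_path_def by (metis list.collapse)
  show ?thesis unfolding is_path_def
  proof (intro conjI allI impI)
    fix i assume i: "Suc i < length (p @ tl q)"
    show "E ((p @ tl q) ! i) ((p @ tl q) ! Suc i)"
    proof (cases "Suc i < length p")
      case True then show ?thesis using a by (auto simp: is_path_def nth_append)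
    next
      case False
      have np: "p \<noteq> []" using a by (simp add: is_path_def)
      define j where "j = i + 1 - length p"
      have "Suc j < length q" using i False np unfolding j_def by (cases q) auto
      then have "E (q ! j) (q ! Suc j)" using b unfolding is_path_def by blast
      moreover have "(p @ tl q) ! i = q ! j"
      proof (cases "Suc i = length p")
        case True
        then have "(p @ tl q) ! i = last p" using np by (simp add: nth_append last_conv_nth True[symmetric])
        then show ?thesis using True a b unfolding j_def is_path_def by (metis add.commute diff_self_eq_0 hd_conv_nth plus_1_eq_Suc)
      next
        case F2: False
        then have "(p @ tl q) ! i = tl q ! (i - length p)" using False by (simp add: nth_append)
        also have "\<dots> = q ! j" using F2 False unfolding j_def by (subst q) (auto simp: Suc_diff_le)
        finally show ?thesis .
      qed
      moreover have "(p @ tl q) ! Suc i = q ! Suc j"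
        using False unfolding j_def by (subst (2) q) (auto simp: nth_append Suc_diff_le)
      ultimately show ?thesis by simp
    qed
  next
    show "p @ tl q \<noteq> []" using a unfolding is_path_def by simp
  next
    show "hd (p @ tl q) = u" using a unfolding is_path_def by simp
  next
    have lp: "last p = v" "last q = w" using a b unfolding is_path_def by auto
    show "last (p @ tl q) = w"
    proof (cases "tl q = []")
      case True
      then have "q = [v]" using q by simp
      then show ?thesis using lp True by simp
    next
      case False
      then show ?thesis using lp by (simp add: last_tl)
    qed
  next
    have "set (tl q) \<subseteq> set q" by (cases q) auto
    then show "set (p @ tl q) \<subseteq> V" using a b unfolding is_path_def by auto
  qed
qed

lemma path_take: "is_path V E p u v \<Longrightarrow> k < length p \<Longrightarrow> is_path V E (take (Suc k) p) u (p ! k)"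
  unfolding is_path_def by (auto simp: last_conv_nth hd_take dest: in_set_takeD)

lemma path_drop: "is_path V E p u v \<Longrightarrow> k < length p \<Longrightarrow> is_path V E (drop k p) (p ! k) v"
  unfolding is_path_def by (auto simp: hd_drop_conv_nth dest: in_set_dropD)

lemma gd_sym: "d u v \<le> d v u"
proof (cases "u \<in> V \<and> v \<in> V")
  case True
  then obtain p where "is_path V E p v u" "length p = Suc (d v u)" using gd_path by blast
  then show ?thesis using gd_le[OF path_rev] by fastforce
next
  case False
  have "\<not> (\<exists>p. is_path V E p u v)" "\<not> (\<exists>p. is_path V E p v u)" using path_V False by blast+
  then show ?thesis unfolding gdist_def by simp
qed

lemma gd_sym': "d u v = d v u" using gd_sym by (simp add: le_antisym)

lemma gd_tri: "u \<in> V \<Longrightarrow> v \<in> V \<Longrightarrow> w \<in> V \<Longrightarrow> d u w \<le> d u v + d v w"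
proof -
  assume "u \<in> V" "v \<in> V" "w \<in> V"
  then obtain p q where p: "is_path V E p u v" "length p = Suc (d u v)"
    and q: "is_path V E q v w" "length q = Suc (d v w)" using gd_path by meson
  show ?thesis using gd_le[OF path_app[OF p(1) q(1)]] p q by simp
qed

lemma gd_self: assumes "u \<in> V" shows "d u u = 0"
proof -
  have "is_path V E [u] u u" using assms by (auto simp: is_path_def)
  from gd_le[OF this] show ?thesis by simp
qed

lemma gd_split:
  assumes x: "x \<in> V" and y: "y \<in> V" and p: "is_path V E p x y" "length p = Suc (d x y)"
    and k: "k \<le> d x y"
  shows "p ! k \<in> V \<and> d x (p ! k) = k \<and> d (p ! k) y = d x y - k"
proof -
  have kl: "k < length p" using p k by simp
  have w: "p ! k \<in> V" using p kl unfolding is_path_def by auto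
  have 1: "d x (p ! k) \<le> k" using gd_le[OF path_take[OF p(1) kl]] kl by simp
  have 2: "d (p ! k) y \<le> d x y - k" using gd_le[OF path_drop[OF p(1) kl]] p by simp
  have "d x y \<le> d x (p!k) + d (p!k) y" using gd_tri x y w by blast
  then show ?thesis using 1 2 w k by linarith
qed

lemma geo_path:
  assumes "x \<in> V" "y \<in> V" "c \<in> V" "d x c + d c y = d x y"
  shows "\<exists>p. shortest_path V E p x y \<and> c \<in> set p"
proof -
  obtain p q where p: "is_path V E p x c" "length p = Suc (d x c)"
    and q: "is_path V E q c y" "length q = Suc (d c y)" using gd_path assms by meson
  have "c \<in> set p" using p by (metis is_path_def last_in_set)
  then show ?thesis using path_app[OF p(1) q(1)] p q assms unfolding shortest_path_def
    by (intro exI[of _ "p @ tl q"]) auto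
qed

lemma count:
  assumes cw: "condorcet_winner V E S c" and fin: "finite S" and y': "y' \<in> V" "y' \<noteq> c"
    and A: "{u\<in>S. d u c < d u y'} \<subseteq> {z}" and w: "w \<in> S" "d w y' < d w c"
  shows False
proof -
  have "card {u\<in>S. d u c < d u y'} \<le> card {z}" using A by (intro card_mono) auto
  then have "card {u\<in>S. d u c < d u y'} \<le> 1" by simp
  moreover have "card {u\<in>S. d u y' < d u c} > 0"
    using fin w by (auto simp: card_gt_0_iff)
  moreover have "card {u\<in>S. d u c < d u y'} > card {u\<in>S. d u y' < d u c}"
    using cw y' unfolding condorcet_winner_def by blast
  ultimately show False by linarith
qed

lemma near:
  assumes cw: "condorcet_winner V E {x, y, z} c" and V: "x \<in> V" "y \<in> V" "z \<in> V"
    and k: "d x c \<le> d x y"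
  shows "d x c + d c y = d x y"
proof (rule ccontr)
  assume ne: "d x c + d c y \<noteq> d x y"
  have c: "c \<in> V" using cw unfolding condorcet_winner_def by blast
  have tri: "d x y \<le> d x c + d c y" using gd_tri V c by blast
  obtain p where p: "is_path V E p x y" "length p = Suc (d x y)" using gd_path V by blast
  define y' where "y' = p ! d x c"
  have s: "y' \<in> V" "d x y' = d x c" "d y' y = d x y - d x c"
    using gd_split[OF V(1,2) p k] unfolding y'_def by auto
  have e1: "d y y' = d x y - d x c" using s(3) gd_sym'[of y y'] by simp
  have e2: "d y c = d c y" using gd_sym'[of y c] .
  have yy: "d y y' < d y c" using e1 e2 tri ne k by arith
  have yc: "y' \<noteq> c" using yy by auto
  have A: "{u\<in>{x,y,z}. d u c < d u y'} \<subseteq> {z}" using s yy by auto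
  show False by (rule count[OF cw _ s(1) yc A, of y]) (use yy in auto)
qed

lemma pair:
  assumes cw: "condorcet_winner V E {x, y, z} c" and V: "x \<in> V" "y \<in> V" "z \<in> V"
  shows "d x c + d c y = d x y"
proof -
  have c: "c \<in> V" using cw unfolding condorcet_winner_def by blast
  have cw': "condorcet_winner V E {y, x, z} c" using cw by (simp add: insert_commute)
  have e: "d y x = d x y" using gd_sym'[of y x] .
  consider "d x c \<le> d x y" | "d y c \<le> d y x" | "d x c > d x y \<and> d y c > d x y"
    using e by linarith
  then show ?thesis
  proof cases
    case 1 then show ?thesis using near[OF cw V] by blast
  next
    case 2 then show ?thesis using near[OF cw' V(2,1,3)] gd_sym'[of y c] gd_sym'[of c x] e by linarith
  next
    case 3
    then have xc: "x \<noteq> c" using gd_self[OF V(1)] by auto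
    have e: "d y x = d x y" using gd_sym'[of y x] .
    have A: "{u\<in>{x,y,z}. d u c < d u x} \<subseteq> {z}" using 3 gd_self[OF V(1)] e by auto
    have False by (rule count[OF cw _ V(1) xc A, of y]) (use 3 e in auto)
    then show ?thesis ..
  qed
qed

end

theorem lemmaE1:
  fixes V :: "'a set" and E :: "'a \<Rightarrow> 'a \<Rightarrow> bool" and x y z c :: 'a
  assumes "graph V E" and "connected_graph V E"
    and "x \<in> V" and "y \<in> V" and "z \<in> V"
    and "condorcet_winner V E {x, y, z} c"
  shows "(\<exists>p. shortest_path V E p x y \<and> c \<in> set p)
       \<and> (\<exists>p. shortest_path V E p x z \<and> c \<in> set p)
       \<and> (\<exists>p. shortest_path V E p y z \<and> c \<in> set p)"
proof -
  have c: "c \<in> V" using assms(6) unfolding condorcet_winner_def by blast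
  have w2: "condorcet_winner V E {x, z, y} c" "condorcet_winner V E {y, z, x} c"
    using assms(6) by (simp_all add: insert_commute)
  show ?thesis
    using geo_path[OF assms(1,2) _ _ c] pair[OF assms(1,2)] assms w2 by blast
qed

end
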